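(* Let $G$ be a connected graph with infinitely many nodes, not necessarily locally finite. Suppose ${}^{*}G$ has a hypernode that is not in its principal galaxy $\Gamma_0$. Then there exist galaxies $\Gamma_i$, $i\in\mathbb Z$, of ${}^{*}G$, all different from $\Gamma_0$, such that for all integers $i<j$ the galaxy $\Gamma_i$ is closer to $\Gamma_0$ than is $\Gamma_j$. In other words, there is a two-way infinite sequence of galaxies totally ordered according to their closeness to $\Gamma_0$.
   Context: Conventions. $G=\{X,B\}$ is a graph whose branches are two-element subsets of $X$, and $d$ is the graph distance. Fix a free ultrafilter $\mathcal F$ on $\mathbb N$. Hypernodes and enlargement. Hypernodes are classes $[x_n]$ of node sequences, with two sequences identified when they agree on a set in $\mathcal F$. A standard hypernode is the class of a constant sequence. ${}^{*}G$ consists of the hypernodes and the hyperbranches $[\{x_n,y_n\}]$ with $\{n:\{x_n,y_n\}\in B\}\in\mathcal F$. Galaxies. Hypernodes $[x_n]$ and $[y_n]$ are limitedly distant if $\{n:d(x_n,y_n)\le k\}\in\mathcal F$ for some $k\in\mathbb N$. Galaxies are the classes of this equivalence relation, together with the hyperbranches between their hypernodes. The principal galaxy $\Gamma_0$ contains the standard hypernodes. Closeness. For galaxies $\Gamma_a,\Gamma_b\ne\Gamma_0$, $\Gamma_a$ is closer to $\Gamma_0$ than is $\Gamma_b$ if there exist ${\bf y}=[y_n]\in\Gamma_a$, ${\bf z}=[z_n]\in\Gamma_b$ and ${\bf x}=[x_n]\in\Gamma_0$ such that for every $m\in\mathbb N$, $\{n: d(z_n,x_n)-d(y_n,x_n)\ge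 m\}\in\mathcal F$. *)

theory Defs
  imports Main
begin

definition is_graph :: "'a set \<Rightarrow> 'a set set \<Rightarrow> bool" where
  "is_graph X B \<equiv> (\<forall>b\<in>B. \<exists>x y. x \<in> X \<and> y \<in> X \<and> x \<noteq> y \<and> b = {x, y})"

definition is_walk :: "'a set set \<Rightarrow> 'a list \<Rightarrow> bool" where
  "is_walk B xs \<equiv> xs \<noteq> [] \<and> (\<forall>i. Suc i < length xs \<longrightarrow> {xs ! i, xs ! Suc i} \<in> B)"

definition connected_graph :: "'a set \<Rightarrow> 'a set set \<Rightarrow> bool" where
  "connected_graph X B \<equiv>
     (\<forall>x\<in>X. \<forall>y\<in>X. \<exists>xs. is_walk B xs \<and> hd xs = x \<and> last xs = y)"

definition gdist :: "'a set set \<Rightarrow> 'a \<Rightarrow> 'a \<Rightarrow> nat" where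
  "gdist B x y = (LEAST n. \<exists>xs. is_walk B xs \<and> hd xs = x \<and> last xs = y \<and> length xs = Suc n)"

definition free_ultrafilter :: "nat set set \<Rightarrow> bool" where
  "free_ultrafilter F \<equiv>
     UNIV \<in> F \<and> {} \<notin> F \<and>
     (\<forall>A C. A \<in> F \<longrightarrow> A \<subseteq> C \<longrightarrow> C \<in> F) \<and>
     (\<forall>A C. A \<in> F \<longrightarrow> C \<in> F \<longrightarrow> A \<inter> C \<in> F) \<and>
     (\<forall>A. A \<in> F \<or> - A \<in> F) \<and>
     (\<forall>A. finite A \<longrightarrow> A \<notin> F)"

text \<open>Node sequences (representatives of hypernodes).\<close>
definition node_seq :: "'a set \<Rightarrow> (nat \<Rightarrow> 'a) \<Rightarrow> bool" where
  "node_seq X x \<equiv> (\<forall>n. x n \<in> X)"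

definition lim_distant :: "nat set set \<Rightarrow> 'a set set \<Rightarrow> (nat \<Rightarrow> 'a) \<Rightarrow> (nat \<Rightarrow> 'a) \<Rightarrow> bool" where
  "lim_distant F B x y \<equiv> (\<exists>k::nat. {n. gdist B (x n) (y n) \<le> k} \<in> F)"

definition galaxy :: "nat set set \<Rightarrow> 'a set \<Rightarrow> 'a set set \<Rightarrow> (nat \<Rightarrow> 'a) \<Rightarrow> (nat \<Rightarrow> 'a) set" where
  "galaxy F X B x = {y. node_seq X y \<and> lim_distant F B y x}"

definition galaxies :: "nat set set \<Rightarrow> 'a set \<Rightarrow> 'a set set \<Rightarrow> (nat \<Rightarrow> 'a) set set" where
  "galaxies F X B = {galaxy F X B x | x. node_seq X x}"

definition principal_galaxy :: "nat set set \<Rightarrow> 'a set \<Rightarrow> 'a set set \<Rightarrow> (nat \<Rightarrow> 'a) set" where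
  "principal_galaxy F X B = {y. node_seq X y \<and> (\<exists>a\<in>X. lim_distant F B y (\<lambda>_. a))}"

definition closer :: "nat set set \<Rightarrow> 'a set \<Rightarrow> 'a set set \<Rightarrow> (nat \<Rightarrow> 'a) set \<Rightarrow> (nat \<Rightarrow> 'a) set \<Rightarrow> bool" where
  "closer F X B Ga Gb \<equiv>
     (\<exists>y\<in>Ga. \<exists>z\<in>Gb. \<exists>x\<in>principal_galaxy F X B.
        \<forall>m::nat. {n. int (gdist B (z n) (x n)) - int (gdist B (y n) (x n)) \<ge> int m} \<in> F)"

end

theory Submission imports Defs "HOL-Library.Discrete_Functions" begin

lemma walk_append:
  assumes p: "is_walk B p" and q: "is_walk B q" and e: "last p = hd q"
  shows "is_walk B (p @ tl q)"
  unfolding is_walk_def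
proof (intro conjI allI impI)
  show "p @ tl q \<noteq> []" using p by (simp add: is_walk_def)
  fix i assume i: "Suc i < length (p @ tl q)"
  have pne: "p \<noteq> []" and qne: "q \<noteq> []" using p q by (auto simp: is_walk_def)
  consider "Suc i < length p" | "Suc i = length p" | "Suc i > length p" by linarith
  then show "{(p @ tl q) ! i, (p @ tl q) ! Suc i} \<in> B"
  proof cases
    case 1 then show ?thesis using p by (simp add: nth_append is_walk_def)
  next
    case 2
    have ii: "i = length p - 1" using 2 by simp
    have a: "(p @ tl q) ! i = q ! 0" using 2 ii pne e by (simp add: nth_append last_conv_nth hd_conv_nth qne)
    have b: "(p @ tl q) ! Suc i = q ! 1" using 2 i qne by (simp add: nth_append nth_tl)
    have "Suc 0 < length q" using 2 i by simp
    then show ?thesis using q a b unfolding is_walk_def by auto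
  next
    case 3
    have L: "Suc (Suc (i - length p)) < length q" using 3 i by simp
    have a: "(p @ tl q) ! i = q ! Suc (i - length p)" using 3 L by (simp add: nth_append nth_tl)
    have b: "(p @ tl q) ! Suc i = q ! Suc (Suc i - length p)" using 3 L by (simp add: nth_append nth_tl)
    have c: "Suc (Suc i - length p) = Suc (Suc (i - length p))" using 3 by simp
    have "Suc (Suc (i - length p)) < length q" using 3 i by simp
    then show ?thesis using q a b c unfolding is_walk_def by auto
  qed
qed

lemma walk_take:
  assumes "is_walk B w" "k < length w"
  shows "is_walk B (take (Suc k) w)" "last (take (Suc k) w) = w ! k" "hd (take (Suc k) w) = hd w"
proof -
  have k: "length w \<le> Suc k \<Longrightarrow> k = length w - 1" using assms(2) by arith
  show "is_walk B (take (Suc k) w)" "last (take (Suc k) w) = w ! k" "hd (take (Suc k) w) = hd w"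
    using assms k by (auto simp: is_walk_def last_conv_nth hd_conv_nth min_def)
qed

lemma walk_drop:
  assumes "is_walk B w" "k < length w"
  shows "is_walk B (drop k w)" "hd (drop k w) = w ! k" "last (drop k w) = last w"
  using assms by (auto simp: is_walk_def hd_drop_conv_nth)

lemma gdist_le:
  assumes "is_walk B xs" "hd xs = u" "last xs = v"
  shows "gdist B u v \<le> length xs - 1"
proof -
  have "length xs = Suc (length xs - 1)" using assms by (cases xs) (auto simp: is_walk_def)
  then show ?thesis unfolding gdist_def using assms by (intro Least_le) blast
qed

lemma gdist_ex:
  assumes "is_walk B xs" "hd xs = u" "last xs = v"
  shows "\<exists>w. is_walk B w \<and> hd w = u \<and> last w = v \<and> length w = Suc (gdist B u v)"
proof -
  have "length xs = Suc (length xs - 1)" using assms by (cases xs) (auto simp: is_walk_def)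
  then have "\<exists>n xs. is_walk B xs \<and> hd xs = u \<and> last xs = v \<and> length xs = Suc n" using assms by blast
  then show ?thesis unfolding gdist_def by (rule LeastI_ex)
qed

lemma gdist_refl: "gdist B u u = 0"
proof -
  have "is_walk B [u]" by (simp add: is_walk_def)
  then show ?thesis using gdist_le[of B "[u]" u u] by simp
qed

lemma triangle:
  assumes "is_walk B p" "hd p = u" "last p = v" "is_walk B q" "hd q = v" "last q = w"
  shows "gdist B u w \<le> gdist B u v + gdist B v w"
proof -
  obtain p' where p': "is_walk B p'" "hd p' = u" "last p' = v" "length p' = Suc (gdist B u v)"
    using gdist_ex assms by metis
  obtain q' where q': "is_walk B q'" "hd q' = v" "last q' = w" "length q' = Suc (gdist B v w)"
    using gdist_ex assms by metis
  have W: "is_walk B (p' @ tl q')" using p' q' by (intro walk_append) auto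
  have "hd (p' @ tl q') = u" using p' by (cases p') (auto simp: is_walk_def)
  moreover have "last (p' @ tl q') = w"
    using p' q' by (cases q') (auto simp: is_walk_def)
  ultimately have "gdist B u w \<le> length (p' @ tl q') - 1" by (rule gdist_le[OF W])
  then show ?thesis using p' q' by simp
qed

lemma geodesic:
  assumes w: "is_walk B w" "hd w = u" "last w = v" "length w = Suc (gdist B u v)"
    and i: "i \<le> gdist B u v"
  shows "gdist B (w ! i) v = gdist B u v - i"
proof (rule antisym)
  have "gdist B (w ! i) v \<le> length (drop i w) - 1"
    using walk_drop[of B w i] w i by (intro gdist_le) auto
  then show "gdist B (w ! i) v \<le> gdist B u v - i" using w by simp
next
  show "gdist B u v - i \<le> gdist B (w ! i) v"
  proof (rule ccontr)
    assume c: "\<not> ?thesis"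
    obtain q where q: "is_walk B q" "hd q = w ! i" "last q = v" "length q = Suc (gdist B (w ! i) v)"
      using gdist_ex[of B "drop i w" "w ! i" v] walk_drop[of B w i] w i by auto
    have W: "is_walk B (take (Suc i) w @ tl q)"
      using walk_take[of B w i] w i q by (intro walk_append) auto
    have "hd (take (Suc i) w @ tl q) = u" using w by (simp add: is_walk_def)
    moreover have "last (take (Suc i) w @ tl q) = v"
      using q walk_take[of B w i] w i by (cases q) (auto simp: is_walk_def)
    ultimately have "gdist B u v \<le> length (take (Suc i) w @ tl q) - 1" by (rule gdist_le[OF W])
    then show False using c q w i by (auto simp: min_def split: if_splits)
  qed
qed

lemma walk_set:
  assumes "is_graph X B" "is_walk B w" "hd w \<in> X" "k < length w"
  shows "w ! k \<in> X"
proof (cases k)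
  case 0
  have "w \<noteq> []" using assms(2) by (simp add: is_walk_def)
  then have "hd w = w ! 0" by (rule hd_conv_nth)
  then show ?thesis using assms(3) 0 by simp
next
  case (Suc j)
  then have "{w ! j, w ! k} \<in> B" using assms by (simp add: is_walk_def)
  then obtain x y where "x \<in> X" "y \<in> X" "{w ! j, w ! k} = {x, y}"
    using assms(1) unfolding is_graph_def by meson
  then show ?thesis by (metis doubleton_eq_iff)
qed


lemma key_arith:
  fixes i :: int and D S :: nat
  assumes "(2 * nat \<bar>i\<bar>)^2 \<le> D" and "S = floor_sqrt D"
  shows "int (nat (max 0 (min (int D) (int (D div 2) + i * int S)))) = int (D div 2) + i * int S"
proof -
  define c where "c = nat \<bar>i\<bar>"
  have c2: "2 * c \<le> S" using assms le_floor_sqrtI unfolding c_def by blast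
  have S2: "S * S \<le> D" using assms floor_sqrt_power2_le[of D] by (simp add: power2_eq_square)
  have "2 * c * S \<le> S * S" by (rule mult_right_mono[OF c2]) simp
  then have "2 * (c * S) \<le> D" using S2 by (metis mult.assoc le_trans)
  then have cS: "c * S \<le> D div 2" by linarith
  have ab: "\<bar>i * int S\<bar> = int (c * S)" unfolding c_def by (simp add: abs_mult)
  have e: "int (c * S) \<le> int (D div 2)" using cS by (simp only: of_nat_le_iff)
  have "\<bar>i * int S\<bar> \<le> int (D div 2)" unfolding ab by (rule e)
  moreover have "int (D div 2) * 2 \<le> int D" by simp
  ultimately have "0 \<le> int (D div 2) + i * int S" "int (D div 2) + i * int S \<le> int D" by linarith+
  then show ?thesis by simp
qed

theorem theorem4p2:
  fixes X :: "'a set" and B :: "'a set set" and F :: "nat set set"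
  assumes "is_graph X B" and "connected_graph X B" and "infinite X"
    and "free_ultrafilter F"
    and "\<exists>x. node_seq X x \<and> x \<notin> principal_galaxy F X B"
  shows "\<exists>\<Gamma> :: int \<Rightarrow> (nat \<Rightarrow> 'a) set.
           (\<forall>i. \<Gamma> i \<in> galaxies F X B \<and> \<Gamma> i \<noteq> principal_galaxy F X B) \<and>
           (\<forall>i j. i < j \<longrightarrow> closer F X B (\<Gamma> i) (\<Gamma> j))"
proof -
  note G = assms(1) and C = assms(2)
  have UF: "UNIV \<in> F" "{} \<notin> F" "\<And>A C. A \<in> F \<Longrightarrow> A \<subseteq> C \<Longrightarrow> C \<in> F"
    "\<And>A C. A \<in> F \<Longrightarrow> C \<in> F \<Longrightarrow> A \<inter> C \<in> F" "\<And>A. A \<in> F \<or> - A \<in> F"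
    using assms(4) unfolding free_ultrafilter_def by blast+
  obtain x0 where x0: "node_seq X x0" "x0 \<notin> principal_galaxy F X B" using assms(5) by blast
  obtain a where a: "a \<in> X" using assms(3) by (metis finite.emptyI ex_in_conv)
  define D where "D n = gdist B (x0 n) a" for n
  have big: "{n. K < D n} \<in> F" for K
  proof -
    have "\<not> lim_distant F B x0 (\<lambda>_. a)" using x0 a unfolding principal_galaxy_def by blast
    then have "{n. D n \<le> K} \<notin> F" unfolding lim_distant_def D_def by blast
    then have "- {n. D n \<le> K} \<in> F" using UF(5) by blast
    moreover have "- {n. D n \<le> K} = {n. K < D n}" by auto
    ultimately show ?thesis by simp
  qed
  have walkex: "\<exists>w. is_walk B w \<and> hd w = u \<and> last w = v" if "u \<in> X" "v \<in> X" for u v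
    using C that unfolding connected_graph_def by blast
  have Wex: "\<exists>w. is_walk B w \<and> hd w = x0 n \<and> last w = a \<and> length w = Suc (D n)" for n
  proof -
    obtain w where "is_walk B w" "hd w = x0 n" "last w = a"
      using walkex[of "x0 n" a] x0(1) a unfolding node_seq_def by blast
    then show ?thesis unfolding D_def by (rule gdist_ex)
  qed
  define W where "W n = (SOME w. is_walk B w \<and> hd w = x0 n \<and> last w = a \<and> length w = Suc (D n))" for n
  have WP: "is_walk B (W n) \<and> hd (W n) = x0 n \<and> last (W n) = a \<and> length (W n) = Suc (D n)" for n
    unfolding W_def by (rule someI_ex[OF Wex])
  define s where "s n = floor_sqrt (D n)" for n
  define t where "t i n = nat (max 0 (min (int (D n)) (int (D n div 2) + i * int (s n))))" for i n
  define y where "y i n = W n ! (D n - t i n)" for i n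
  define Nb where "Nb i = (2 * nat \<bar>i\<bar>)^2" for i :: int
  have tD: "t i n \<le> D n" for i n unfolding t_def by simp
  have gy: "gdist B (y i n) a = t i n" for i n
  proof -
    have "gdist B (y i n) a = gdist B (x0 n) a - (D n - t i n)"
      unfolding y_def using WP[of n] by (intro geodesic) (auto simp: D_def)
    then show ?thesis using tD[of i n] by (simp add: D_def)
  qed
  have yX: "y i n \<in> X" for i n
    unfolding y_def using WP[of n] x0(1) G by (intro walk_set[of X B]) (auto simp: node_seq_def)
  have yseq: "node_seq X (y i)" for i using yX by (simp add: node_seq_def)
  have key: "int (t i n) = int (D n div 2) + i * int (s n)" if "Nb i \<le> D n" for i n
    unfolding t_def s_def by (rule key_arith) (use that in \<open>simp_all add: Nb_def\<close>)
  have sm: "m \<le> s n" if "m^2 \<le> D n" for m n using that le_floor_sqrtI s_def by simp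
  have diff: "int (t j n) - int (t i n) \<ge> int m" if "i < j" "Nb i + Nb j + m^2 < D n" for i j m n
  proof -
    have "int (t j n) - int (t i n) = (j - i) * int (s n)"
      using key[of i n] key[of j n] that by (simp add: algebra_simps)
    moreover have "int (s n) \<le> (j - i) * int (s n)" using that(1) mult_right_mono[of 1 "j - i" "int (s n)"] by simp
    moreover have "m \<le> s n" using sm that(2) by simp
    ultimately show ?thesis by linarith
  qed
  have selfg: "y i \<in> galaxy F X B (y i)" for i
    unfolding galaxy_def lim_distant_def using yseq UF(1) by (simp add: gdist_refl)
  have apr: "(\<lambda>_. a) \<in> principal_galaxy F X B"
    unfolding principal_galaxy_def lim_distant_def node_seq_def using a UF(1) by (auto simp: gdist_refl)
  have nonprin: "galaxy F X B (y i) \<noteq> principal_galaxy F X B" for i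
  proof
    assume eq: "galaxy F X B (y i) = principal_galaxy F X B"
    then have "y i \<in> principal_galaxy F X B" using selfg[of i] by (simp only:)
    then obtain b k where b: "b \<in> X" and S: "{n. gdist B (y i n) b \<le> k} \<in> F"
      unfolding principal_galaxy_def lim_distant_def by blast
    define m where "m = k + gdist B b a + 1"
    have T: "{n. Nb (i - 1) + Nb i + m^2 < D n} \<in> F" by (rule big)
    have "{n. gdist B (y i n) b \<le> k} \<inter> {n. Nb (i - 1) + Nb i + m^2 < D n} \<in> F" by (rule UF(4)[OF S T])
    then have "{n. gdist B (y i n) b \<le> k} \<inter> {n. Nb (i - 1) + Nb i + m^2 < D n} \<noteq> {}"
      using UF(2) by metis
    then obtain n where "n \<in> {n. gdist B (y i n) b \<le> k} \<inter> {n. Nb (i - 1) + Nb i + m^2 < D n}"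
      by blast
    then have n1: "gdist B (y i n) b \<le> k" and n2: "Nb (i - 1) + Nb i + m^2 < D n" by simp_all
    have "int (t i n) - int (t (i - 1) n) \<ge> int m" using diff[of "i - 1" i m n] n2 by simp
    then have tm: "m \<le> t i n" by linarith
    obtain p where p: "is_walk B p" "hd p = y i n" "last p = b" using walkex[OF yX b] by blast
    obtain q where q: "is_walk B q" "hd q = b" "last q = a" using walkex[OF b a] by blast
    have "gdist B (y i n) a \<le> gdist B (y i n) b + gdist B b a" by (rule triangle[OF p q])
    then show False using tm n1 gy[of i n] m_def by simp
  qed
  show ?thesis
  proof (intro exI[of _ "\<lambda>i. galaxy F X B (y i)"] conjI allI impI)
    fix i
    show "galaxy F X B (y i) \<in> galaxies F X B" unfolding galaxies_def using yseq by blast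
    show "galaxy F X B (y i) \<noteq> principal_galaxy F X B" by (rule nonprin)
  next
    fix i j :: int assume ij: "i < j"
    show "closer F X B (galaxy F X B (y i)) (galaxy F X B (y j))"
      unfolding closer_def
    proof (intro bexI[OF _ selfg] bexI[OF _ apr] allI)
      fix m :: nat
      have "{n. Nb i + Nb j + m^2 < D n} \<subseteq> {n. int (gdist B (y j n) a) - int (gdist B (y i n) a) \<ge> int m}"
        using diff[OF ij, of m] gy by auto
      then show "{n. int (gdist B (y j n) a) - int (gdist B (y i n) a) \<ge> int m} \<in> F"
        by (rule UF(3)[OF big])
    qed
  qed
qed

end
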